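(* Consider the state space model and the extended alive particle filter (APF) described in the context, with $N\ge1$. The marginal likelihood estimator $$\widehat Z = \prod_{t=1}^T \frac{\sum_{n=1}^N w_t^{(n)}}{P_t - 1}$$ is unbiased: $\mathbb{E}[\widehat Z] = p(y_{1:T})$, where $p(y_{1:T})$ is the marginal density of the observations under the model.
   Context: State space model: $x_0\sim p(x_0)$; for $t=1,\dots,T$, $x_t \sim f_t(x_t\mid x_{t-1})$ and $y_t\sim g_t(y_t\mid x_t)$; the observations $y_1,\dots,y_T$ are fixed. Extended alive particle filter with $N$ particles: initially draw $x_0^{(1)},\dots,x_0^{(N)}$ independently from $p(x_0)$ and set $w_0^{(n)}=1$. For each $t=1,\dots,T$: set $P_t\gets 0$; for each $n=1,\dots,N+1$, repeat the following until the weight is positive: draw an index $a$ from the categorical distribution with probabilities $w_{t-1}^{(m)}/\sum_{l=1}^N w_{t-1}^{(l)}$, $m=1,\dots,N$; draw $x_t^{(n)}\sim f_t(\cdot\mid x_{t-1}^{(a)})$; increment $P_t$ by one; set $w_t^{(n)} = g_t(y_t\mid x_t^{(n)})$. Thus $P_t$ is the total number of propagations at time $t$, including those made for the $(N+1)$-th particle, whose state and weight are otherwise never used. *)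

theory Defs
  imports "HOL-Probability.Probability"
begin

text \<open>
  Observations y_1..y_T are fixed and absorbed into the likelihoods g t x = g_t(y_t | x).
  Kernels f t x = f_t(. | x) are probability measures on M; p0 is the initial law.
  A particle system is a function xs :: nat => 'a on indices {..<N} (extensional).
\<close>

text \<open>Weights w_{t-1} used when propagating at time t (w_0 = 1).\<close>
definition apf_w :: "(nat \<Rightarrow> 'a \<Rightarrow> real) \<Rightarrow> nat \<Rightarrow> (nat \<Rightarrow> 'a) \<Rightarrow> nat \<Rightarrow> real" where
  "apf_w g t xs m = (if t = 1 then 1 else g (t - 1) (xs m))"

text \<open>Law of one propagation at time t: draw ancestor a with probability
  w_{t-1}^a / sum_l w_{t-1}^l, then x ~ f t (xs a).\<close>
definition apf_Q :: "'a measure \<Rightarrow> (nat \<Rightarrow> 'a \<Rightarrow> 'a measure) \<Rightarrow> (nat \<Rightarrow> 'a \<Rightarrow> real)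
    \<Rightarrow> nat \<Rightarrow> nat \<Rightarrow> (nat \<Rightarrow> 'a) \<Rightarrow> 'a measure" where
  "apf_Q M f g N t xs = measure_of (space M) (sets M)
     (\<lambda>A. \<Sum>m<N. ennreal (apf_w g t xs m / (\<Sum>l<N. apf_w g t xs l)) * emeasure (f t (xs m)) A)"

text \<open>Measurable space of the algorithm state: (particles, running estimate).\<close>
definition apf_SS :: "'a measure \<Rightarrow> nat \<Rightarrow> ((nat \<Rightarrow> 'a) \<times> real) measure" where
  "apf_SS M N = (\<Pi>\<^sub>M i\<in>{..<N}. M) \<Otimes>\<^sub>M borel"

text \<open>The repeat-until loops at time t, run on the i.i.d. sequence omega of all propagations
  made at time t (omega !! k is the (k+1)-th propagated state).  The particles
  x_t^(1..N+1) are the states at the first N+1 positions with positive weight, and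
  P_t is the number of propagations up to and including the (N+1)-th success.
  If fewer than N+1 successes ever occur (the algorithm does not terminate), the run
  contributes estimate 0.\<close>
definition apf_step_fn :: "(nat \<Rightarrow> 'a \<Rightarrow> real) \<Rightarrow> nat \<Rightarrow> nat \<Rightarrow> (nat \<Rightarrow> 'a) \<Rightarrow> real
    \<Rightarrow> 'a stream \<Rightarrow> (nat \<Rightarrow> 'a) \<times> real" where
  "apf_step_fn g N t xs Z \<omega> =
     (let A = {k. 0 < g t (\<omega> !! k)} in
      if finite A \<and> card A \<le> N then (xs, 0)
      else let xs' = restrict (\<lambda>n. \<omega> !! enumerate A n) {..<N};
               P = enumerate A N + 1
           in (xs', Z * ((\<Sum>n<N. g t (xs' n)) / real (P - 1))))"

definition apf_step :: "'a measure \<Rightarrow> (nat \<Rightarrow> 'a \<Rightarrow> 'a measure) \<Rightarrow> (nat \<Rightarrow> 'a \<Rightarrow> real)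
    \<Rightarrow> nat \<Rightarrow> nat \<Rightarrow> (nat \<Rightarrow> 'a) \<times> real \<Rightarrow> ((nat \<Rightarrow> 'a) \<times> real) measure" where
  "apf_step M f g N t s =
     distr (stream_space (apf_Q M f g N t (fst s))) (apf_SS M N) (apf_step_fn g N t (fst s) (snd s))"

fun apf_run :: "'a measure \<Rightarrow> 'a measure \<Rightarrow> (nat \<Rightarrow> 'a \<Rightarrow> 'a measure) \<Rightarrow> (nat \<Rightarrow> 'a \<Rightarrow> real)
    \<Rightarrow> nat \<Rightarrow> nat \<Rightarrow> ((nat \<Rightarrow> 'a) \<times> real) measure" where
  "apf_run M p0 f g N 0 = distr (\<Pi>\<^sub>M i\<in>{..<N}. p0) (apf_SS M N) (\<lambda>xs. (xs, 1))"
| "apf_run M p0 f g N (Suc t) = apf_run M p0 f g N t \<bind> apf_step M f g N (Suc t)"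

text \<open>Backward likelihood: apf_bk k t x = p(y_{t+1:t+k} | x_t = x).\<close>
fun apf_bk :: "(nat \<Rightarrow> 'a \<Rightarrow> 'a measure) \<Rightarrow> (nat \<Rightarrow> 'a \<Rightarrow> real) \<Rightarrow> nat \<Rightarrow> nat \<Rightarrow> 'a \<Rightarrow> ennreal" where
  "apf_bk f g 0 t x = 1"
| "apf_bk f g (Suc k) t x =
     (\<integral>\<^sup>+ x'. ennreal (g (Suc t) x') * apf_bk f g k (Suc t) x' \<partial>f (Suc t) x)"

definition apf_marginal :: "'a measure \<Rightarrow> (nat \<Rightarrow> 'a \<Rightarrow> 'a measure) \<Rightarrow> (nat \<Rightarrow> 'a \<Rightarrow> real)
    \<Rightarrow> nat \<Rightarrow> ennreal" where
  "apf_marginal p0 f g T = (\<integral>\<^sup>+ x0. apf_bk f g T 0 x0 \<partial>p0)"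

end

theory Submission
  imports Defs "HOL-Probability.Probability"
begin


lemma enum_props:
  fixes A :: "nat set"
  assumes "infinite A \<or> K < card A"
  shows "enumerate A K \<in> A" "{j\<in>A. j < enumerate A K} = enumerate A ` {..<K}"
    "inj_on (enumerate A) {..K}"
proof -
  show "enumerate A K \<in> A"
    using assms by (metis enumerate_in_set finite_enumerate_in_set)
  show inj: "inj_on (enumerate A) {..K}"
  proof (cases "finite A")
    case True
    then have K: "K < card A" using assms by auto
    show ?thesis unfolding inj_on_def
    proof (intro ballI impI)
      fix x y assume xy: "x \<in> {..K}" "y \<in> {..K}" "enumerate A x = enumerate A y"
      show "x = y"
      proof (rule ccontr)
        assume "x \<noteq> y"
        then consider "x < y" | "y < x" by linarith
        then show False
          using finite_enumerate_mono[of x y A] finite_enumerate_mono[of y x A] xy K True by fastforce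
      qed
    qed
  next
    case False
    then show ?thesis unfolding inj_on_def
      by (metis enumerate_mono less_linear less_irrefl)
  qed
  show "{j\<in>A. j < enumerate A K} = enumerate A ` {..<K}"
  proof (cases "finite A")
    case True
    then have K: "K < card A" using assms by auto
    show ?thesis
    proof (rule equalityI)
      show "{j\<in>A. j < enumerate A K} \<subseteq> enumerate A ` {..<K}"
      proof
        fix j assume "j \<in> {j\<in>A. j < enumerate A K}"
        then have j: "j \<in> A" "j < enumerate A K" by auto
        then obtain n where "n < card A" "enumerate A n = j" using finite_enumerate_Ex[OF True] by blast
        then show "j \<in> enumerate A ` {..<K}"
          using j K True finite_enumerate_mono[of K n A]
          by (metis imageI lessThan_iff not_less_iff_gr_or_eq)
      qed
      show "enumerate A ` {..<K} \<subseteq> {j\<in>A. j < enumerate A K}"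
      proof (rule image_subsetI)
        fix n assume "n \<in> {..<K}"
        then have n: "n < K" by simp
        have "n < card A" using n K by linarith
        then have "enumerate A n \<in> A" using finite_enumerate_in_set[OF True] by blast
        moreover have "enumerate A n < enumerate A K" using finite_enumerate_mono[OF n True K] .
        ultimately show "enumerate A n \<in> {j\<in>A. j < enumerate A K}" by simp
      qed
    qed
  next
    case False
    show ?thesis
    proof (rule equalityI)
      show "{j\<in>A. j < enumerate A K} \<subseteq> enumerate A ` {..<K}"
      proof
        fix j assume "j \<in> {j\<in>A. j < enumerate A K}"
        then have j: "j \<in> A" "j < enumerate A K" by auto
        then obtain n where "enumerate A n = j" using enumerate_Ex[OF False] by blast
        then show "j \<in> enumerate A ` {..<K}"
          using j False by auto
      qed
      show "enumerate A ` {..<K} \<subseteq> {j\<in>A. j < enumerate A K}"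
      proof (rule image_subsetI)
        fix n assume "n \<in> {..<K}"
        then have n: "n < K" by simp
        have "enumerate A n \<in> A" using False by (rule enumerate_in_set)
        moreover have "enumerate A n < enumerate A K" using enumerate_mono[OF n False] .
        ultimately show "enumerate A n \<in> {j\<in>A. j < enumerate A K}" by simp
      qed
    qed
  qed
qed

definition cntS :: "(nat \<Rightarrow> bool) \<Rightarrow> nat \<Rightarrow> nat" where
  "cntS P m = card {j. j < m \<and> P j}"

lemma cntS_uniq:
  assumes "P m1" "P m2" "cntS P m1 = K" "cntS P m2 = K"
  shows "m1 = m2"
proof (rule ccontr)
  assume ne: "m1 \<noteq> m2"
  have *: "cntS P a < cntS P b" if "a < b" "P a" for a b
  proof -
    have "insert a {j. j < a \<and> P j} \<subseteq> {j. j < b \<and> P j}" using that by auto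
    then have "card (insert a {j. j < a \<and> P j}) \<le> card {j. j < b \<and> P j}"
      by (intro card_mono) auto
    then show ?thesis unfolding cntS_def by simp
  qed
  show False using ne *[of m1 m2] *[of m2 m1] assms by (cases "m1 < m2") auto
qed

lemma cntS_enum:
  assumes "infinite {j. P j} \<or> K < card {j. P j}"
  shows "P (enumerate {j. P j} K)" "cntS P (enumerate {j. P j} K) = K"
proof -
  let ?A = "{j. P j}"
  show "P (enumerate ?A K)" using enum_props(1)[OF assms] by simp
  have "{j. j < enumerate ?A K \<and> P j} = enumerate ?A ` {..<K}"
    using enum_props(2)[OF assms] by auto
  moreover have "inj_on (enumerate ?A) {..<K}"
    using enum_props(3)[OF assms] by (rule inj_on_subset) auto
  ultimately show "cntS P (enumerate ?A K) = K"
    unfolding cntS_def by (simp add: card_image)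
qed

lemma cntS_exists:
  assumes "infinite {j. P j}"
  shows "\<exists>m. P m \<and> cntS P m = K"
  using cntS_enum[of P K] assms by blast

lemma cntS_exists_iff:
  "(\<exists>m. P m \<and> cntS P m = K) \<longleftrightarrow> (infinite {j. P j} \<or> K < card {j. P j})"
proof
  assume "\<exists>m. P m \<and> cntS P m = K"
  then obtain m where m: "P m" "cntS P m = K" by blast
  show "infinite {j. P j} \<or> K < card {j. P j}"
  proof (cases "finite {j. P j}")
    case False then show ?thesis by simp
  next
    case True
    then have fin: "finite {j. P j}" by simp
    have "insert m {j. j < m \<and> P j} \<subseteq> {j. P j}" using m by auto
    then have "card (insert m {j. j < m \<and> P j}) \<le> card {j. P j}"
      using fin by (intro card_mono) auto
    then show ?thesis using m unfolding cntS_def by simp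
  qed
next
  assume "infinite {j. P j} \<or> K < card {j. P j}"
  then show "\<exists>m. P m \<and> cntS P m = K" using cntS_enum by blast
qed



definition sins :: "nat \<Rightarrow> 'a \<Rightarrow> 'a stream \<Rightarrow> 'a stream" where
  "sins k x \<omega> = stake k \<omega> @- (x ## sdrop k \<omega>)"

lemma sins_0[simp]: "sins 0 x \<omega> = x ## \<omega>"
  by (simp add: sins_def)

lemma sins_Suc[simp]: "sins (Suc k) x (y ## \<omega>) = y ## sins k x \<omega>"
  by (simp add: sins_def)

lemma snth_Stream_if: "(y ## \<omega>) !! n = (if n = 0 then y else \<omega> !! (n - 1))"
  by (cases n) auto

lemma sins_snth: "sins k x \<omega> !! i = (if i < k then \<omega> !! i else if i = k then x else \<omega> !! (i - 1))"
proof (induction k arbitrary: \<omega> i)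
  case 0
  then show ?case by (cases i) auto
next
  case (Suc k)
  obtain y \<omega>' where \<omega>: "\<omega> = y ## \<omega>'" by (cases \<omega>) auto
  show ?case
    unfolding \<omega> sins_Suc by (cases i) (auto simp: Suc.IH snth_Stream_if)
qed

lemma measurable_sins[measurable (raw)]:
  assumes [measurable]: "f \<in> measurable N M" "g \<in> measurable N (stream_space M)"
  shows "(\<lambda>p. sins k (f p) (g p)) \<in> measurable N (stream_space M)"
  unfolding sins_def by measurable

lemma (in prob_space) nn_integral_stream_sins:
  assumes F[measurable]: "F \<in> borel_measurable (stream_space M)"
  shows "(\<integral>\<^sup>+\<omega>. F \<omega> \<partial>stream_space M) = (\<integral>\<^sup>+x. \<integral>\<^sup>+\<omega>. F (sins k x \<omega>) \<partial>stream_space M \<partial>M)"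
  using F
proof (induction k arbitrary: F)
  case 0
  then show ?case by (simp add: nn_integral_stream_space)
next
  case (Suc k)
  note [measurable] = Suc.prems
  interpret S: prob_space "stream_space M" by (rule prob_space_stream_space)
  interpret P: pair_sigma_finite M M by unfold_locales
  have "(\<integral>\<^sup>+\<omega>. F \<omega> \<partial>stream_space M) = (\<integral>\<^sup>+y. \<integral>\<^sup>+\<omega>. F (y ## \<omega>) \<partial>stream_space M \<partial>M)"
    by (rule nn_integral_stream_space) simp
  also have "\<dots> = (\<integral>\<^sup>+y. \<integral>\<^sup>+x. \<integral>\<^sup>+\<omega>. F (y ## sins k x \<omega>) \<partial>stream_space M \<partial>M \<partial>M)"
    by (intro nn_integral_cong Suc.IH) simp
  also have "\<dots> = (\<integral>\<^sup>+x. \<integral>\<^sup>+y. \<integral>\<^sup>+\<omega>. F (y ## sins k x \<omega>) \<partial>stream_space M \<partial>M \<partial>M)"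
    by (rule P.Fubini') measurable
  also have "\<dots> = (\<integral>\<^sup>+x. \<integral>\<^sup>+\<omega>. F (sins (Suc k) x \<omega>) \<partial>stream_space M \<partial>M)"
  proof (rule nn_integral_cong)
    fix x assume [measurable]: "x \<in> space M"
    show "(\<integral>\<^sup>+y. \<integral>\<^sup>+\<omega>. F (y ## sins k x \<omega>) \<partial>stream_space M \<partial>M) =
        (\<integral>\<^sup>+\<omega>. F (sins (Suc k) x \<omega>) \<partial>stream_space M)"
      by (subst (2) nn_integral_stream_space) simp_all
  qed
  finally show ?case .
qed

lemma cntS_Suc: "cntS P (Suc m) = cntS P m + (if P m then 1 else 0)"
proof -
  have "{j. j < Suc m \<and> P j} = (if P m then insert m {j. j < m \<and> P j} else {j. j < m \<and> P j})"
    by (auto simp: less_Suc_eq)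
  then show ?thesis unfolding cntS_def by simp
qed

lemma cntS_0[simp]: "cntS P 0 = 0"
  by (simp add: cntS_def)

lemma measurable_cntS[measurable]:
  assumes [measurable]: "\<And>j. Measurable.pred M (P j)"
  shows "(\<lambda>\<omega>. cntS (\<lambda>j. P j \<omega>) m) \<in> measurable M (count_space UNIV)"
proof (induction m)
  case 0
  then show ?case by simp
next
  case (Suc m)
  note [measurable] = Suc.IH
  have *: "(\<lambda>\<omega>. cntS (\<lambda>j. P j \<omega>) (Suc m)) =
      (\<lambda>\<omega>. (\<lambda>i \<omega>. i + (if P m \<omega> then 1 else 0)) (cntS (\<lambda>j. P j \<omega>) m) \<omega>)"
    by (simp add: cntS_Suc)
  show ?case unfolding *
    by (rule measurable_compose_countable[where g = "\<lambda>\<omega>. cntS (\<lambda>j. P j \<omega>) m"]) measurable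
qed

lemma pred_cntS_eq[measurable]:
  assumes [measurable]: "\<And>j. Measurable.pred M (P j)"
  shows "Measurable.pred M (\<lambda>\<omega>. cntS (\<lambda>j. P j \<omega>) m = c)"
  by measurable

lemma cntS_sins:
  assumes "j < m"
  shows "cntS (\<lambda>i. P (sins j x \<omega> !! i)) m = cntS (\<lambda>i. P (\<omega> !! i)) (m - 1) + (if P x then 1 else 0)"
  using assms
proof (induction m)
  case 0 then show ?case by simp
next
  case (Suc m)
  show ?case
  proof (cases "j < m")
    case True
    then obtain m' where m: "m = Suc m'" by (cases m) auto
    show ?thesis using Suc.IH[OF True] True unfolding m
      by (simp add: cntS_Suc sins_snth)
  next
    case False
    then have "j = m" using Suc.prems by simp
    have "cntS (\<lambda>i. P (sins j x \<omega> !! i)) m = cntS (\<lambda>i. P (\<omega> !! i)) m"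
      unfolding cntS_def using \<open>j = m\<close> by (intro arg_cong[where f=card]) (auto simp: sins_snth)
    then show ?thesis using \<open>j = m\<close> by (simp add: cntS_Suc sins_snth)
  qed
qed



lemma (in prob_space) AE_stream_infinite:
  assumes [measurable]: "Measurable.pred M s"
    and p: "emeasure M {x\<in>space M. s x} \<noteq> 0"
  shows "AE \<omega> in stream_space M. infinite {j. s (\<omega> !! j)}"
proof -
  interpret S: prob_space "stream_space M" by (rule prob_space_stream_space)
  define B where "B m = {\<omega>\<in>space (stream_space M). \<forall>i\<ge>m. \<not> s (\<omega> !! i)}" for m
  have B_sets[measurable]: "B m \<in> sets (stream_space M)" for m
    unfolding B_def by measurable
  have B0: "emeasure (stream_space M) (B 0) = 0"
  proof -
    define e where "e = S.prob (B 0)"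
    define p where "p = prob {x\<in>space M. s x}"
    have "emeasure (stream_space M) (B 0) =
        (\<integral>\<^sup>+t. emeasure (stream_space M) {x\<in>space (stream_space M). t ## x \<in> B 0} \<partial>M)"
      by (rule emeasure_stream_space) simp
    also have "\<dots> = (\<integral>\<^sup>+t. ennreal e * indicator {x\<in>space M. \<not> s x} t \<partial>M)"
    proof (rule nn_integral_cong)
      fix t assume t: "t \<in> space M"
      have "{x\<in>space (stream_space M). t ## x \<in> B 0} = (if s t then {} else B 0)"
        using t by (auto simp: B_def space_stream_space snth_Stream_if streams_Stream)
      then show "emeasure (stream_space M) {x\<in>space (stream_space M). t ## x \<in> B 0} =
          ennreal e * indicator {x\<in>space M. \<not> s x} t"
        using t by (simp add: e_def S.emeasure_eq_measure indicator_def)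
    qed
    also have "\<dots> = ennreal e * emeasure M {x\<in>space M. \<not> s x}"
      by (rule nn_integral_cmult_indicator) measurable
    also have "emeasure M {x\<in>space M. \<not> s x} = ennreal (1 - p)"
    proof -
      have "{x\<in>space M. \<not> s x} = space M - {x\<in>space M. s x}" by auto
      then show ?thesis
        by (simp add: p_def prob_compl emeasure_eq_measure)
    qed
    finally have eq: "ennreal e = ennreal e * ennreal (1 - p)"
      by (simp add: e_def S.emeasure_eq_measure)
    have "p > 0"
      using p by (simp add: p_def emeasure_eq_measure zero_less_measure_iff)
    have "e \<ge> 0" "p \<le> 1" by (auto simp: e_def p_def)
    then have "e = e * (1 - p)"
      using eq by (simp add: ennreal_mult[symmetric])
    then have "e * p = 0" by (simp add: algebra_simps)
    then have "e = 0" using \<open>p > 0\<close> by simp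
    then show ?thesis by (simp add: e_def S.emeasure_eq_measure)
  qed
  have Bm: "emeasure (stream_space M) (B m) = 0" for m
  proof (induction m)
    case 0 then show ?case by (rule B0)
  next
    case (Suc m)
    have "emeasure (stream_space M) (B (Suc m)) =
        (\<integral>\<^sup>+t. emeasure (stream_space M) {x\<in>space (stream_space M). t ## x \<in> B (Suc m)} \<partial>M)"
      by (rule emeasure_stream_space) simp
    also have "\<dots> = (\<integral>\<^sup>+t. emeasure (stream_space M) (B m) \<partial>M)"
    proof (rule nn_integral_cong)
      fix t assume t: "t \<in> space M"
      have "{x\<in>space (stream_space M). t ## x \<in> B (Suc m)} = B m"
      proof -
        have iff: "(\<forall>i\<ge>Suc m. \<not> s ((t ## x) !! i)) \<longleftrightarrow> (\<forall>i\<ge>m. \<not> s (x !! i))" for x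
        proof
          assume "\<forall>i\<ge>Suc m. \<not> s ((t ## x) !! i)"
          then show "\<forall>i\<ge>m. \<not> s (x !! i)"
            by (metis Suc_le_mono snth_Stream)
        next
          assume a: "\<forall>i\<ge>m. \<not> s (x !! i)"
          show "\<forall>i\<ge>Suc m. \<not> s ((t ## x) !! i)"
          proof (intro allI impI)
            fix i assume "Suc m \<le> i"
            then obtain i' where "i = Suc i'" "m \<le> i'" by (cases i) auto
            then show "\<not> s ((t ## x) !! i)" using a by simp
          qed
        qed
        show ?thesis using t iff by (auto simp: B_def space_stream_space streams_Stream)
      qed
      then show "emeasure (stream_space M) {x\<in>space (stream_space M). t ## x \<in> B (Suc m)} =
          emeasure (stream_space M) (B m)" by simp
    qed
    also have "\<dots> = 0" using Suc.IH by simp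
    finally show ?case .
  qed
  have null: "(\<Union>m. B m) \<in> null_sets (stream_space M)"
    using Bm by (intro null_sets_UN) (auto simp: null_sets_def)
  show ?thesis
  proof (rule AE_I'[OF null])
    show "{\<omega>\<in>space (stream_space M). \<not> infinite {j. s (\<omega> !! j)}} \<subseteq> (\<Union>m. B m)"
    proof (rule subsetI)
      fix \<omega> assume "\<omega> \<in> {\<omega>\<in>space (stream_space M). \<not> infinite {j. s (\<omega> !! j)}}"
      then have \<omega>: "\<omega> \<in> space (stream_space M)" and fin: "finite {j. s (\<omega> !! j)}" by auto
      obtain m where "\<forall>j\<in>{j. s (\<omega> !! j)}. j < m"
        using fin finite_nat_bounded by blast
      then have "\<omega> \<in> B m" using \<omega> by (auto simp: B_def not_le[symmetric])
      then show "\<omega> \<in> (\<Union>m. B m)" by blast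
    qed
  qed
qed

lemma (in prob_space) stream_key:
  fixes s :: "'a \<Rightarrow> bool" and \<phi> :: "'a \<Rightarrow> ennreal" and N :: nat
  assumes [measurable]: "Measurable.pred M s" "\<phi> \<in> borel_measurable M" and N: "N \<ge> 1"
  shows "(\<integral>\<^sup>+\<omega>. (\<Sum>m. if s (\<omega> !! m) \<and> cntS (\<lambda>j. s (\<omega> !! j)) m = N
        then (\<Sum>j<m. if s (\<omega> !! j) then \<phi> (\<omega> !! j) else 0) * ennreal (1 / real m) else 0)
      \<partial>stream_space M)
    = (\<integral>\<^sup>+x. (if s x then \<phi> x else 0) \<partial>M)"
proof -
  interpret S: prob_space "stream_space M" by (rule prob_space_stream_space)
  define A where "A = (\<integral>\<^sup>+x. (if s x then \<phi> x else 0) \<partial>M)"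
  define H where "H m \<omega> = (if m \<noteq> 0 \<and> s (\<omega> !! (m - 1)) \<and> cntS (\<lambda>j. s (\<omega> !! j)) (m - 1) = N - 1
    then 1 else 0 :: ennreal)" for m \<omega>
  have H_meas[measurable]: "H m \<in> borel_measurable (stream_space M)" for m
    unfolding H_def by measurable
  define G where "G m j \<omega> = (if s (\<omega> !! m) \<and> cntS (\<lambda>j. s (\<omega> !! j)) m = N \<and> s (\<omega> !! j)
    then \<phi> (\<omega> !! j) else 0)" for m j \<omega>
  have G_meas[measurable]: "G m j \<in> borel_measurable (stream_space M)" for m j
    unfolding G_def by measurable
  have G_int: "(\<integral>\<^sup>+\<omega>. G m j \<omega> \<partial>stream_space M) = A * (\<integral>\<^sup>+\<omega>. H m \<omega> \<partial>stream_space M)"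
    if "j < m" for m j
  proof -
    have "(\<integral>\<^sup>+\<omega>. G m j \<omega> \<partial>stream_space M) =
        (\<integral>\<^sup>+x. \<integral>\<^sup>+\<omega>. G m j (sins j x \<omega>) \<partial>stream_space M \<partial>M)"
      by (rule nn_integral_stream_sins) simp
    also have "\<dots> = (\<integral>\<^sup>+x. (if s x then \<phi> x else 0) * (\<integral>\<^sup>+\<omega>. H m \<omega> \<partial>stream_space M) \<partial>M)"
    proof (rule nn_integral_cong)
      fix x assume "x \<in> space M"
      have "G m j (sins j x \<omega>) = (if s x then \<phi> x else 0) * H m \<omega>" for \<omega>
      proof -
        have c: "cntS (\<lambda>i. s (sins j x \<omega> !! i)) m = cntS (\<lambda>i. s (\<omega> !! i)) (m - 1) + (if s x then 1 else 0)"
          by (rule cntS_sins[OF that])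
        show ?thesis
          using that N unfolding G_def H_def c by (auto simp: sins_snth)
      qed
      then show "(\<integral>\<^sup>+\<omega>. G m j (sins j x \<omega>) \<partial>stream_space M) =
          (if s x then \<phi> x else 0) * (\<integral>\<^sup>+\<omega>. H m \<omega> \<partial>stream_space M)"
        by (simp add: nn_integral_cmult)
    qed
    also have "\<dots> = A * (\<integral>\<^sup>+\<omega>. H m \<omega> \<partial>stream_space M)"
      unfolding A_def by (rule nn_integral_multc) measurable
    finally show ?thesis .
  qed
  have Fm: "(\<integral>\<^sup>+\<omega>. (if s (\<omega> !! m) \<and> cntS (\<lambda>j. s (\<omega> !! j)) m = N
        then (\<Sum>j<m. if s (\<omega> !! j) then \<phi> (\<omega> !! j) else 0) * ennreal (1 / real m) else 0)
      \<partial>stream_space M) = A * (\<integral>\<^sup>+\<omega>. H m \<omega> \<partial>stream_space M)" for m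
  proof -
    have "(\<integral>\<^sup>+\<omega>. (if s (\<omega> !! m) \<and> cntS (\<lambda>j. s (\<omega> !! j)) m = N
        then (\<Sum>j<m. if s (\<omega> !! j) then \<phi> (\<omega> !! j) else 0) * ennreal (1 / real m) else 0)
      \<partial>stream_space M) = (\<integral>\<^sup>+\<omega>. (\<Sum>j<m. G m j \<omega>) * ennreal (1 / real m) \<partial>stream_space M)"
      by (intro nn_integral_cong) (auto simp: G_def intro!: sum.neutral)
    also have "\<dots> = (\<Sum>j<m. \<integral>\<^sup>+\<omega>. G m j \<omega> \<partial>stream_space M) * ennreal (1 / real m)"
      by (subst nn_integral_multc) (auto simp: nn_integral_sum)
    also have "\<dots> = (of_nat m * (A * (\<integral>\<^sup>+\<omega>. H m \<omega> \<partial>stream_space M))) * ennreal (1 / real m)"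
      using G_int by simp
    also have "\<dots> = A * (\<integral>\<^sup>+\<omega>. H m \<omega> \<partial>stream_space M)"
    proof (cases "m = 0")
      case True
      then have "H m = (\<lambda>_. 0)" by (auto simp: H_def)
      then show ?thesis using True by simp
    next
      case False
      have "of_nat m * ennreal (1 / real m) = 1"
        using False by (simp add: ennreal_of_nat_eq_real_of_nat ennreal_mult[symmetric] del: ennreal_1)
      then show ?thesis by (metis mult.assoc mult.commute mult_1)
    qed
    finally show ?thesis .
  qed
  have "(\<integral>\<^sup>+\<omega>. (\<Sum>m. if s (\<omega> !! m) \<and> cntS (\<lambda>j. s (\<omega> !! j)) m = N
        then (\<Sum>j<m. if s (\<omega> !! j) then \<phi> (\<omega> !! j) else 0) * ennreal (1 / real m) else 0)
      \<partial>stream_space M) = (\<Sum>m. A * (\<integral>\<^sup>+\<omega>. H m \<omega> \<partial>stream_space M))"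
    by (subst nn_integral_suminf) (auto simp: Fm)
  also have "\<dots> = A * (\<integral>\<^sup>+\<omega>. (\<Sum>m. H m \<omega>) \<partial>stream_space M)"
    by (simp add: nn_integral_suminf)
  also have "\<dots> = A"
  proof (cases "emeasure M {x\<in>space M. s x} = 0")
    case True
    have "AE x in M. \<not> s x"
      using True by (intro AE_I'[of "{x\<in>space M. s x}"]) (auto simp: null_sets_def)
    then have "A = 0" unfolding A_def
      by (subst nn_integral_0_iff_AE) (auto elim!: eventually_mono)
    then show ?thesis by simp
  next
    case False
    have "AE \<omega> in stream_space M. (\<Sum>m. H m \<omega>) = 1"
      using AE_stream_infinite[OF _ False]
    proof (rule eventually_mono)
      fix \<omega> assume inf: "infinite {j. s (\<omega> !! j)}"
      obtain m' where m': "s (\<omega> !! m')" "cntS (\<lambda>j. s (\<omega> !! j)) m' = N - 1"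
        using cntS_exists[OF inf] by blast
      have "H m \<omega> = (if m = Suc m' then 1 else 0)" for m
      proof (cases "m \<noteq> 0 \<and> s (\<omega> !! (m - 1)) \<and> cntS (\<lambda>j. s (\<omega> !! j)) (m - 1) = N - 1")
        case True
        then have "m - 1 = m'" using cntS_uniq[of "\<lambda>j. s (\<omega> !! j)" "m - 1" m' "N - 1"] m' by blast
        then show ?thesis using True by (auto simp: H_def)
      next
        case False
        then show ?thesis using m' by (auto simp: H_def)
      qed
      then have "(\<lambda>m. H m \<omega>) sums 1"
        using sums_single[of "Suc m'" "\<lambda>_. 1::ennreal"] by simp
      then show "(\<Sum>m. H m \<omega>) = 1" by (rule sums_unique[symmetric])
    qed simp
    then have "(\<integral>\<^sup>+\<omega>. (\<Sum>m. H m \<omega>) \<partial>stream_space M) = (\<integral>\<^sup>+\<omega>. 1 \<partial>stream_space M)"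
      by (rule nn_integral_cong_AE)
    also have "\<dots> = 1" by (simp add: S.emeasure_space_1)
    finally show ?thesis by simp
  qed
  finally show ?thesis unfolding A_def .
qed



lemma sets_stream_space_scylinder:
  "sets (stream_space S) = sigma_sets (streams (space S)) (scylinder (space S) ` lists (sets S))"
proof -
  let ?G = "scylinder (space S) ` lists (sets S)"
  have sc_Pow: "?G \<subseteq> Pow (streams (space S))"
    using scylinder_streams by auto
  have "sets (stream_space S) = sets (sigma (streams (space S)) ?G)"
    (is "?S = sets ?R")
  proof (rule antisym)
    let ?V = "\<lambda>i. vimage_algebra (streams (space S)) (\<lambda>s. s !! i) S"
    have Ssig: "sets S = sets (sigma (space S) (sets S))"
      by (simp add: sets.sigma_sets_eq sets.space_closed)
    show "?S \<subseteq> sets ?R"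
      unfolding sets_stream_space_eq
    proof (safe intro!: sets_Sup_in_sets del: subsetI equalityI)
      fix i :: nat
      show "space (?V i) = space ?R"
        using scylinder_streams by (subst space_measure_of) auto
      { fix A assume "A \<in> sets S"
        then have "scylinder (space S) (replicate i (space S) @ [A]) = (\<lambda>s. s !! i) -` A \<inter> streams (space S)"
          by (induction i) (auto simp add: streams_shd streams_stl cong: conj_cong)
        moreover have "scylinder (space S) (replicate i (space S) @ [A]) \<in> ?R"
          using \<open>A \<in> sets S\<close> by (intro in_measure_of[OF sc_Pow] imageI) auto
        ultimately have "(\<lambda>s. s !! i) -` A \<inter> streams (space S) \<in> ?R" by simp }
      then show "sets (?V i) \<subseteq> ?R"
        apply (subst vimage_algebra_cong[OF refl refl Ssig])
        apply (subst vimage_algebra_sigma[OF sets.space_closed])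
        apply (simp add: streams_iff_snth) []
        apply (subst sigma_le_sets)
        apply auto
        done
    qed
    show "sets ?R \<subseteq> ?S"
      unfolding sigma_le_sets[OF sc_Pow] by (auto intro!: sets_scylinder)
  qed
  then show ?thesis using sc_Pow by simp
qed

lemma Int_stable_scylinder: "Int_stable (scylinder (space S) ` lists (sets S))"
proof (rule Int_stableI_image)
  fix xs ys assume "xs \<in> lists (sets S)" "ys \<in> lists (sets S)"
  then show "\<exists>zs\<in>lists (sets S). scylinder (space S) xs \<inter> scylinder (space S) ys = scylinder (space S) zs"
  proof (induction xs arbitrary: ys)
    case Nil then show ?case
      by (auto simp add: Int_absorb1 scylinder_streams)
  next
    case xs: (Cons x xs)
    show ?case
    proof (cases ys)
      case Nil with xs.hyps show ?thesis
        by (auto simp add: Int_absorb2 scylinder_streams intro!: bexI[of _ "x#xs"])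
    next
      case ys: (Cons y ys')
      with xs.IH[of ys'] xs.prems obtain zs where
        "zs \<in> lists (sets S)" and eq: "scylinder (space S) xs \<inter> scylinder (space S) ys' = scylinder (space S) zs"
        by auto
      show ?thesis
      proof (intro bexI[of _ "(x \<inter> y)#zs"])
        show "x \<inter> y # zs \<in> lists (sets S)"
          using \<open>zs\<in>lists (sets S)\<close> \<open>x\<in>sets S\<close> \<open>ys\<in>lists (sets S)\<close> ys by auto
        show "scylinder (space S) (x # xs) \<inter> scylinder (space S) ys = scylinder (space S) (x \<inter> y # zs)"
          by (auto simp add: eq[symmetric] ys)
      qed
    qed
  qed
qed

lemma (in prob_space) emeasure_scylinder_Cons:
  assumes A: "A \<in> sets M" and As: "\<forall>B\<in>set As. B \<in> sets M"
  shows "emeasure (stream_space M) (scylinder (space M) (A # As)) =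
    emeasure M A * emeasure (stream_space M) (scylinder (space M) As)"
proof -
  have s1: "scylinder (space M) (A # As) \<in> sets (stream_space M)"
  proof -
    have "\<forall>x\<in>set (A # As). x \<in> sets M" using A As by auto
    then show ?thesis by (rule sets_scylinder)
  qed
  have s2: "scylinder (space M) As \<in> sets (stream_space M)"
    by (rule sets_scylinder) (use A As in auto)
  note [measurable] = s1 s2
  have "emeasure (stream_space M) (scylinder (space M) (A # As)) =
      (\<integral>\<^sup>+t. emeasure (stream_space M) {x\<in>space (stream_space M). t ## x \<in> scylinder (space M) (A # As)} \<partial>M)"
    by (rule emeasure_stream_space) (rule s1)
  also have "\<dots> = (\<integral>\<^sup>+t. emeasure (stream_space M) (scylinder (space M) As) * indicator A t \<partial>M)"
  proof (rule nn_integral_cong)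
    fix t assume t: "t \<in> space M"
    have "{x\<in>space (stream_space M). t ## x \<in> scylinder (space M) (A # As)} =
        (if t \<in> A then scylinder (space M) As else {})"
      using t scylinder_streams[of "space M" As] by (auto simp: space_stream_space streams_Stream)
    then show "emeasure (stream_space M) {x\<in>space (stream_space M). t ## x \<in> scylinder (space M) (A # As)} =
        emeasure (stream_space M) (scylinder (space M) As) * indicator A t"
      by (simp add: indicator_def)
  qed
  also have "\<dots> = emeasure (stream_space M) (scylinder (space M) As) * emeasure M A"
    using A by (rule nn_integral_cmult_indicator)
  also have "\<dots> = emeasure M A * emeasure (stream_space M) (scylinder (space M) As)"
    by (rule mult.commute)
  finally show ?thesis .
qed

lemma extend_measure_null:
  assumes "i \<in> I" "G i = {}" "\<mu> i \<noteq> 0"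
  shows "extend_measure \<Omega> I G \<mu> = measure_of \<Omega> (G ` I) (\<lambda>_. 0)"
proof -
  have "\<not> (\<exists>\<mu>'. (\<forall>i\<in>I. \<mu>' (G i) = \<mu> i) \<and> measure_space \<Omega> (sigma_sets \<Omega> (G ` I)) \<mu>')"
  proof
    assume "\<exists>\<mu>'. (\<forall>i\<in>I. \<mu>' (G i) = \<mu> i) \<and> measure_space \<Omega> (sigma_sets \<Omega> (G ` I)) \<mu>'"
    then obtain \<mu>' where a: "\<forall>i\<in>I. \<mu>' (G i) = \<mu> i" and b: "measure_space \<Omega> (sigma_sets \<Omega> (G ` I)) \<mu>'"
      by blast
    have "\<mu>' {} = 0" using b by (simp add: measure_space_def positive_def)
    moreover have "\<mu>' (G i) = \<mu> i" using a assms(1) by blast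
    ultimately show False using assms(2,3) by simp
  qed
  then have nc: "\<not> ((\<exists>\<mu>'. (\<forall>i\<in>I. \<mu>' (G i) = \<mu> i) \<and> measure_space \<Omega> (sigma_sets \<Omega> (G ` I)) \<mu>') \<and> \<not> (\<forall>i\<in>I. \<mu> i = 0))"
    by blast
  show ?thesis unfolding extend_measure_def by (simp only: nc if_False)
qed

lemma PiM_null:
  fixes Q :: "'a measure"
  assumes Q0: "\<And>A. emeasure Q A = 0"
  shows "emeasure (PiM (UNIV :: nat set) (\<lambda>_. Q)) Y = 0"
  unfolding PiM_def
  apply (subst extend_measure_null[where i = "({0::nat}, \<lambda>_. {})"])
  subgoal by blast
  subgoal by (simp add: prod_emb_def)
  subgoal by (simp add: Q0)
  subgoal by (simp add: emeasure_sigma)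
  done

lemma stream_space_null:
  fixes Q :: "'a measure"
  assumes Q0: "\<And>A. emeasure Q A = 0"
  shows "emeasure (stream_space Q) X = 0"
proof (cases "X \<in> sets (stream_space Q)")
  case True
  show ?thesis
    by (subst stream_space_eq_distr) (simp add: emeasure_distr True PiM_null[OF Q0])
next
  case False
  then show ?thesis by (simp add: emeasure_notin_sets)
qed



locale apf_ctx =
  fixes M :: "'a measure" and p0 :: "'a measure" and f :: "nat \<Rightarrow> 'a \<Rightarrow> 'a measure"
    and g :: "nat \<Rightarrow> 'a \<Rightarrow> real" and N T :: nat
  assumes N1: "N \<ge> 1" and p0: "prob_space p0" and sets_p0: "sets p0 = sets M"
    and f_meas: "\<And>t. t \<in> {1..T} \<Longrightarrow> f t \<in> M \<rightarrow>\<^sub>M prob_algebra M"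
    and g_meas: "\<And>t. t \<in> {1..T} \<Longrightarrow> g t \<in> borel_measurable M"
    and g_nonneg: "\<And>t x. t \<in> {1..T} \<Longrightarrow> x \<in> space M \<Longrightarrow> 0 \<le> g t x"
begin

abbreviation "PS \<equiv> (\<Pi>\<^sub>M i\<in>{..<N}. M)"
abbreviation "SS \<equiv> apf_SS M N"

definition W :: "nat \<Rightarrow> (nat \<Rightarrow> 'a) \<Rightarrow> real" where
  "W t xs = (\<Sum>l<N. apf_w g t xs l)"

definition mu :: "nat \<Rightarrow> (nat \<Rightarrow> 'a) \<Rightarrow> 'a set \<Rightarrow> ennreal" where
  "mu t xs A = (\<Sum>m<N. ennreal (apf_w g t xs m / W t xs) * emeasure (f t (xs m)) A)"

lemma space_M_ne: "space M \<noteq> {}"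
  using prob_space.not_empty[OF p0] sets_eq_imp_space_eq[OF sets_p0] by simp

lemma f_sub: "t \<in> {1..T} \<Longrightarrow> f t \<in> measurable M (subprob_algebra M)"
  using f_meas by (rule measurable_prob_algebraD)

lemma f_prob: "t \<in> {1..T} \<Longrightarrow> x \<in> space M \<Longrightarrow> prob_space (f t x) \<and> sets (f t x) = sets M"
  using measurable_space[OF f_meas] by (auto simp: space_prob_algebra)

lemma xs_in: "xs \<in> space PS \<Longrightarrow> m < N \<Longrightarrow> xs m \<in> space M"
  by (auto simp: space_PiM)

lemma w_nonneg: "t \<in> {1..T} \<Longrightarrow> xs \<in> space PS \<Longrightarrow> m < N \<Longrightarrow> 0 \<le> apf_w g t xs m"
  unfolding apf_w_def by (auto intro!: g_nonneg xs_in)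

lemma W_nonneg: "t \<in> {1..T} \<Longrightarrow> xs \<in> space PS \<Longrightarrow> 0 \<le> W t xs"
  unfolding W_def by (auto intro!: sum_nonneg w_nonneg)

lemma W_zero: "t \<in> {1..T} \<Longrightarrow> xs \<in> space PS \<Longrightarrow> \<not> 0 < W t xs \<Longrightarrow> m < N \<Longrightarrow> apf_w g t xs m = 0"
  using W_nonneg[of t xs] sum_nonneg_eq_0_iff[of "{..<N}" "apf_w g t xs"] w_nonneg[of t xs]
  unfolding W_def by auto

lemma sets_Q[simp]: "sets (apf_Q M f g N t xs) = sets M"
  unfolding apf_Q_def by (simp add: sets.space_closed)

lemma space_Q[simp]: "space (apf_Q M f g N t xs) = space M"
  unfolding apf_Q_def by (simp add: sets.space_closed)

definition D :: "nat \<Rightarrow> (nat \<Rightarrow> 'a) \<Rightarrow> 'a measure" where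
  "D t xs = density (count_space {..<N}) (\<lambda>m. ennreal (apf_w g t xs m / W t xs)) \<bind> (\<lambda>m. f t (xs m))"

lemma D_kernel:
  assumes t: "t \<in> {1..T}" and xs: "xs \<in> space PS"
  shows "(\<lambda>m. f t (xs m)) \<in> measurable (density (count_space {..<N}) c) (subprob_algebra M)"
proof -
  have "f t (xs m) \<in> space (subprob_algebra M)" if "m < N" for m
    using measurable_space[OF f_sub[OF t] xs_in[OF xs that]] .
  then show ?thesis
    by (subst measurable_cong_sets[OF sets_density refl]) auto
qed

lemma D_sets: "sets (D t xs) = sets M" if t: "t \<in> {1..T}" and xs: "xs \<in> space PS"
proof -
  have "(0::nat) \<in> space (density (count_space {..<N}) (\<lambda>m. ennreal (apf_w g t xs m / W t xs)))"
    using N1 by simp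
  then have ne: "space (density (count_space {..<N}) (\<lambda>m. ennreal (apf_w g t xs m / W t xs))) \<noteq> {}"
    by blast
  have s: "sets (f t (xs m)) = sets M"
    if "m \<in> space (density (count_space {..<N}) (\<lambda>m. ennreal (apf_w g t xs m / W t xs)))" for m
  proof -
    have "m < N" using that by simp
    then show ?thesis using f_prob[OF t xs_in[OF xs]] by blast
  qed
  show ?thesis unfolding D_def by (rule sets_bind[OF s ne])
qed

lemma D_nn_integral:
  assumes t: "t \<in> {1..T}" and xs: "xs \<in> space PS" and h: "h \<in> borel_measurable M"
  shows "(\<integral>\<^sup>+x. h x \<partial>D t xs) = (\<Sum>m<N. ennreal (apf_w g t xs m / W t xs) * (\<integral>\<^sup>+x. h x \<partial>f t (xs m)))"
  unfolding D_def
  by (simp add: nn_integral_bind[OF h D_kernel[OF t xs]] nn_integral_density nn_integral_count_space_finite)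

lemma D_emeasure:
  assumes t: "t \<in> {1..T}" and xs: "xs \<in> space PS" and A: "A \<in> sets M"
  shows "emeasure (D t xs) A = mu t xs A"
proof -
  have "emeasure (D t xs) A = (\<integral>\<^sup>+x. indicator A x \<partial>D t xs)"
    using A D_sets[OF t xs] by simp
  also have "\<dots> = mu t xs A"
    unfolding mu_def using A f_prob[OF t xs_in[OF xs]]
    by (subst D_nn_integral[OF t xs]) auto
  finally show ?thesis .
qed

lemma Q_eq_D:
  assumes t: "t \<in> {1..T}" and xs: "xs \<in> space PS"
  shows "apf_Q M f g N t xs = D t xs"
proof -
  have "apf_Q M f g N t xs = measure_of (space M) (sets M) (emeasure (D t xs))"
    unfolding apf_Q_def
  proof (rule measure_of_eq[OF sets.space_closed])
    fix a assume "a \<in> sigma_sets (space M) (sets M)"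
    then have a: "a \<in> sets M" by (simp add: sets.sigma_sets_eq)
    show "(\<Sum>m<N. ennreal (apf_w g t xs m / (\<Sum>l<N. apf_w g t xs l)) * emeasure (f t (xs m)) a) =
      emeasure (D t xs) a"
      using D_emeasure[OF t xs a] by (simp add: mu_def W_def)
  qed
  also have "\<dots> = measure_of (space (D t xs)) (sets (D t xs)) (emeasure (D t xs))"
    using D_sets[OF t xs] sets_eq_imp_space_eq[OF D_sets[OF t xs]] by simp
  also have "\<dots> = D t xs" by (rule measure_of_of_measure)
  finally show ?thesis .
qed

lemma Q_emeasure:
  assumes t: "t \<in> {1..T}" and xs: "xs \<in> space PS" and A: "A \<in> sets M"
  shows "emeasure (apf_Q M f g N t xs) A = mu t xs A"
  using Q_eq_D[OF t xs] D_emeasure[OF t xs A] by simp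

lemma mu_zero:
  assumes t: "t \<in> {1..T}" and xs: "xs \<in> space PS" and W0: "\<not> 0 < W t xs"
  shows "mu t xs A = 0"
  unfolding mu_def using W_zero[OF t xs W0] by simp

lemma Q_null:
  assumes t: "t \<in> {1..T}" and xs: "xs \<in> space PS" and W0: "\<not> 0 < W t xs"
  shows "emeasure (apf_Q M f g N t xs) A = 0"
proof (cases "A \<in> sets M")
  case True
  then show ?thesis using Q_emeasure[OF t xs True] mu_zero[OF t xs W0] by simp
next
  case False
  then show ?thesis by (simp add: emeasure_notin_sets)
qed

lemma Q_prob:
  assumes t: "t \<in> {1..T}" and xs: "xs \<in> space PS" and W0: "0 < W t xs"
  shows "prob_space (apf_Q M f g N t xs)"
proof (rule prob_spaceI)
  have "emeasure (apf_Q M f g N t xs) (space M) = mu t xs (space M)"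
    by (rule Q_emeasure[OF t xs]) simp
  also have "\<dots> = (\<Sum>m<N. ennreal (apf_w g t xs m / W t xs))"
    unfolding mu_def
  proof (intro sum.cong refl)
    fix m assume "m \<in> {..<N}"
    then have p: "prob_space (f t (xs m))" and sp: "sets (f t (xs m)) = sets M"
      using f_prob[OF t xs_in[OF xs]] by auto
    have "space (f t (xs m)) = space M" using sp by (rule sets_eq_imp_space_eq)
    then have "emeasure (f t (xs m)) (space M) = 1"
      using prob_space.emeasure_space_1[OF p] by simp
    then show "ennreal (apf_w g t xs m / W t xs) * emeasure (f t (xs m)) (space M) = ennreal (apf_w g t xs m / W t xs)"
      by simp
  qed
  also have "\<dots> = ennreal (\<Sum>m<N. apf_w g t xs m / W t xs)"
    using w_nonneg[OF t xs] W_nonneg[OF t xs] by (intro sum_ennreal) auto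
  also have "(\<Sum>m<N. apf_w g t xs m / W t xs) = 1"
    using W0 by (simp add: sum_divide_distrib[symmetric] W_def)
  finally show "emeasure (apf_Q M f g N t xs) (space (apf_Q M f g N t xs)) = 1" by simp
qed

lemma Q_nn_integral:
  assumes t: "t \<in> {1..T}" and xs: "xs \<in> space PS" and h: "h \<in> borel_measurable M"
  shows "(\<integral>\<^sup>+x. h x \<partial>apf_Q M f g N t xs) = (\<Sum>m<N. ennreal (apf_w g t xs m / W t xs) * (\<integral>\<^sup>+x. h x \<partial>f t (xs m)))"
  using Q_eq_D[OF t xs] D_nn_integral[OF t xs h] by simp

end



lemma measurable_snth_idx[measurable (raw)]:
  assumes "h \<in> measurable X (count_space UNIV)" "F \<in> measurable X (stream_space M)"
  shows "(\<lambda>x. F x !! h x) \<in> measurable X M"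
  by (rule measurable_compose_countable[where f = "\<lambda>i x. F x !! i" and g = h])
     (auto intro: measurable_compose[OF assms(2) measurable_snth] assms(1))

lemma measurable_real_nat[measurable (raw)]:
  assumes "h \<in> measurable X (count_space UNIV)"
  shows "(\<lambda>x. real (h x)) \<in> borel_measurable X"
  by (rule measurable_compose[OF assms]) simp

lemma enumerate_eq_Least:
  assumes "infinite {j. P j} \<or> K < card {j. P j}"
  shows "enumerate {j. P j} K = (LEAST m. P m \<and> cntS P m = K)"
proof (rule Least_equality[symmetric])
  show "P (enumerate {j. P j} K) \<and> cntS P (enumerate {j. P j} K) = K"
    using cntS_enum[OF assms] by simp
  fix y assume "P y \<and> cntS P y = K"
  then have "y = enumerate {j. P j} K"
    using cntS_enum[OF assms] cntS_uniq[of P y "enumerate {j. P j} K" K] by blast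
  then show "enumerate {j. P j} K \<le> y" by simp
qed

context apf_ctx
begin

lemma meas_comp: "m < N \<Longrightarrow> (\<lambda>s. fst s m) \<in> measurable SS M"
  unfolding apf_SS_def
  by (rule measurable_compose[OF measurable_fst measurable_component_singleton]) auto

lemma w_meas: "t \<in> {1..T} \<Longrightarrow> m < N \<Longrightarrow> (\<lambda>s. apf_w g t (fst s) m) \<in> borel_measurable SS"
  unfolding apf_w_def
  by (cases "t = 1") (auto intro!: measurable_compose[OF meas_comp g_meas])

lemma W_meas: "t \<in> {1..T} \<Longrightarrow> (\<lambda>s. W t (fst s)) \<in> borel_measurable SS"
  unfolding W_def by (intro borel_measurable_sum w_meas) auto

lemma mu_meas:
  assumes t: "t \<in> {1..T}" and A: "A \<in> sets M"
  shows "(\<lambda>s. mu t (fst s) A) \<in> borel_measurable SS"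
  unfolding mu_def
proof (intro borel_measurable_sum)
  fix m assume "m \<in> {..<N}"
  then have m: "m < N" by simp
  note [measurable] = w_meas[OF t m] W_meas[OF t]
    measurable_compose[OF meas_comp[OF m] measurable_compose[OF f_sub[OF t] measurable_emeasure_subprob_algebra[OF A]]]
  show "(\<lambda>s. ennreal (apf_w g t (fst s) m / W t (fst s)) * emeasure (f t (fst s m)) A) \<in> borel_measurable SS"
    by measurable
qed

lemma space_SS_fst: "s \<in> space SS \<Longrightarrow> fst s \<in> space PS"
  unfolding apf_SS_def by (auto simp: space_pair_measure)

lemma SK_scyl:
  assumes t: "t \<in> {1..T}" and xs: "xs \<in> space PS" and As: "As \<in> lists (sets M)"
  shows "emeasure (stream_space (apf_Q M f g N t xs)) (scylinder (space M) As) =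
    (if 0 < W t xs then prod_list (map (mu t xs) As) else 0)"
proof (cases "0 < W t xs")
  case False
  then show ?thesis using stream_space_null[OF Q_null[OF t xs False]] by simp
next
  case True
  interpret Q: prob_space "apf_Q M f g N t xs" by (rule Q_prob[OF t xs True])
  interpret S: prob_space "stream_space (apf_Q M f g N t xs)" by (rule Q.prob_space_stream_space)
  have "emeasure (stream_space (apf_Q M f g N t xs)) (scylinder (space M) As) = prod_list (map (mu t xs) As)"
    using As
  proof (induction As)
    case Nil
    then show ?case using S.emeasure_space_1 by (simp add: space_stream_space)
  next
    case (Cons A As)
    then have A: "A \<in> sets M" and As': "\<forall>B\<in>set As. B \<in> sets M" by auto
    have "emeasure (stream_space (apf_Q M f g N t xs)) (scylinder (space M) (A # As)) =
      emeasure (apf_Q M f g N t xs) A * emeasure (stream_space (apf_Q M f g N t xs)) (scylinder (space M) As)"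
      using Q.emeasure_scylinder_Cons[of A As] A As' by simp
    then show ?case using Cons Q_emeasure[OF t xs A] by simp
  qed
  then show ?thesis using True by simp
qed

lemma prod_list_mu_meas:
  assumes t: "t \<in> {1..T}" and As: "As \<in> lists (sets M)"
  shows "(\<lambda>s. prod_list (map (mu t (fst s)) As)) \<in> borel_measurable SS"
  using As
proof (induction As)
  case Nil then show ?case by simp
next
  case (Cons A As)
  then have A: "A \<in> sets M" and As': "As \<in> lists (sets M)" by auto
  have [measurable]: "(\<lambda>s. prod_list (map (mu t (fst s)) As)) \<in> borel_measurable SS"
    using Cons As' by blast
  have [measurable]: "(\<lambda>s. mu t (fst s) A) \<in> borel_measurable SS"
    by (rule mu_meas[OF t A])
  show ?case by simp
qed

lemma SK_scyl_meas:
  assumes t: "t \<in> {1..T}" and As: "As \<in> lists (sets M)"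
  shows "(\<lambda>s. emeasure (stream_space (apf_Q M f g N t (fst s))) (scylinder (space M) As)) \<in> borel_measurable SS"
proof -
  note [measurable] = W_meas[OF t] prod_list_mu_meas[OF t As]
  have "(\<lambda>s. if 0 < W t (fst s) then prod_list (map (mu t (fst s)) As) else 0) \<in> borel_measurable SS"
    by measurable
  then show ?thesis
    by (rule measurable_cong[THEN iffD1, rotated]) (simp add: SK_scyl[OF t space_SS_fst As])
qed

lemma SK_meas:
  assumes t: "t \<in> {1..T}"
  shows "(\<lambda>s. stream_space (apf_Q M f g N t (fst s))) \<in> measurable SS (subprob_algebra (stream_space M))"
proof (rule measurable_subprob_algebra_generated[where \<Omega> = "streams (space M)" and G = "scylinder (space M) ` lists (sets M)"])
  show "sets (stream_space M) = sigma_sets (streams (space M)) (scylinder (space M) ` lists (sets M))"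
    by (rule sets_stream_space_scylinder)
  show "Int_stable (scylinder (space M) ` lists (sets M))"
    by (rule Int_stable_scylinder)
  show "scylinder (space M) ` lists (sets M) \<subseteq> Pow (streams (space M))"
    using scylinder_streams by auto
  fix s assume s: "s \<in> space SS"
  then have xs: "fst s \<in> space PS" by (rule space_SS_fst)
  show "sets (stream_space (apf_Q M f g N t (fst s))) = sets (stream_space M)"
    by (rule sets_stream_space_cong) simp
  show "subprob_space (stream_space (apf_Q M f g N t (fst s)))"
  proof (cases "0 < W t (fst s)")
    case True
    interpret Q: prob_space "apf_Q M f g N t (fst s)" by (rule Q_prob[OF t xs True])
    interpret S: prob_space "stream_space (apf_Q M f g N t (fst s))" by (rule Q.prob_space_stream_space)
    show ?thesis by (rule S.subprob_space_axioms)
  next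
    case False
    obtain x where x: "x \<in> space M" using space_M_ne by blast
    show ?thesis
    proof (rule subprob_spaceI)
      show "emeasure (stream_space (apf_Q M f g N t (fst s))) (space (stream_space (apf_Q M f g N t (fst s)))) \<le> 1"
        using stream_space_null[OF Q_null[OF t xs False]] by simp
      show "space (stream_space (apf_Q M f g N t (fst s))) \<noteq> {}"
        using sconst_streams[OF x] by (auto simp: space_stream_space)
    qed
  qed
next
  fix A assume "A \<in> scylinder (space M) ` lists (sets M)"
  then obtain As where "As \<in> lists (sets M)" "A = scylinder (space M) As" by auto
  then show "(\<lambda>s. emeasure (stream_space (apf_Q M f g N t (fst s))) A) \<in> borel_measurable SS"
    using SK_scyl_meas[OF t] by simp
next
  show "(\<lambda>s. emeasure (stream_space (apf_Q M f g N t (fst s))) (streams (space M))) \<in> borel_measurable SS"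
    using SK_scyl_meas[OF t, of "[]"] by simp
qed

definition eidx :: "nat \<Rightarrow> nat \<Rightarrow> 'a stream \<Rightarrow> nat" where
  "eidx t K \<omega> = (LEAST m. 0 < g t (\<omega> !! m) \<and> cntS (\<lambda>j. 0 < g t (\<omega> !! j)) m = K)"

definition succ :: "nat \<Rightarrow> 'a stream \<Rightarrow> bool" where
  "succ t \<omega> = (\<exists>m. 0 < g t (\<omega> !! m) \<and> cntS (\<lambda>j. 0 < g t (\<omega> !! j)) m = N)"

definition step_alt :: "nat \<Rightarrow> (nat \<Rightarrow> 'a) \<times> real \<Rightarrow> 'a stream \<Rightarrow> (nat \<Rightarrow> 'a) \<times> real" where
  "step_alt t s \<omega> = (if succ t \<omega> then (restrict (\<lambda>n. \<omega> !! eidx t n \<omega>) {..<N},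
      snd s * ((\<Sum>n<N. g t (\<omega> !! eidx t n \<omega>)) / real (eidx t N \<omega>))) else (fst s, 0))"

lemma succ_iff: "succ t \<omega> \<longleftrightarrow> \<not> (finite {k. 0 < g t (\<omega> !! k)} \<and> card {k. 0 < g t (\<omega> !! k)} \<le> N)"
  unfolding succ_def cntS_exists_iff by auto

lemma enum_eidx:
  assumes "succ t \<omega>" "n \<le> N"
  shows "enumerate {k. 0 < g t (\<omega> !! k)} n = eidx t n \<omega>"
  unfolding eidx_def
  by (rule enumerate_eq_Least) (use assms succ_iff in auto)

lemma step_fn_eq: "apf_step_fn g N t xs Z \<omega> = step_alt t (xs, Z) \<omega>"
proof (cases "succ t \<omega>")
  case False
  then show ?thesis unfolding apf_step_fn_def step_alt_def using succ_iff by auto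
next
  case True
  have e: "enumerate {k. 0 < g t (\<omega> !! k)} n = eidx t n \<omega>" if "n \<le> N" for n
    using enum_eidx[OF True that] .
  have r: "restrict (\<lambda>n. \<omega> !! enumerate {k. 0 < g t (\<omega> !! k)} n) {..<N} = restrict (\<lambda>n. \<omega> !! eidx t n \<omega>) {..<N}"
    using e by (auto simp: restrict_def fun_eq_iff)
  have s: "(\<Sum>n<N. g t (restrict (\<lambda>n. \<omega> !! eidx t n \<omega>) {..<N} n)) = (\<Sum>n<N. g t (\<omega> !! eidx t n \<omega>))"
    by (intro sum.cong) auto
  have c: "\<not> (finite {k. 0 < g t (\<omega> !! k)} \<and> card {k. 0 < g t (\<omega> !! k)} \<le> N)"
    using True succ_iff[of t \<omega>] by simp
  have "apf_step_fn g N t xs Z \<omega> = (restrict (\<lambda>n. \<omega> !! enumerate {k. 0 < g t (\<omega> !! k)} n) {..<N},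
      Z * ((\<Sum>n<N. g t (restrict (\<lambda>n. \<omega> !! enumerate {k. 0 < g t (\<omega> !! k)} n) {..<N} n)) /
        real (enumerate {k. 0 < g t (\<omega> !! k)} N + 1 - 1)))"
    unfolding apf_step_fn_def Let_def using c by (simp only: if_False simp_thms)
  also have "\<dots> = step_alt t (xs, Z) \<omega>"
    unfolding step_alt_def r using True by (simp add: s e)
  finally show ?thesis .
qed

lemma step_alt_meas:
  assumes t: "t \<in> {1..T}"
  shows "(\<lambda>p. step_alt t (fst p) (snd p)) \<in> measurable (SS \<Otimes>\<^sub>M stream_space M) SS"
proof -
  note [measurable] = g_meas[OF t]
  show ?thesis
    unfolding step_alt_def succ_def eidx_def apf_SS_def by measurable
qed

lemma step_fn_eq': "apf_step_fn g N t xs Z = step_alt t (xs, Z)"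
  by (rule ext) (rule step_fn_eq)

lemma step_eq: "apf_step M f g N t = (\<lambda>s. distr (stream_space (apf_Q M f g N t (fst s))) SS (step_alt t s))"
  by (simp add: fun_eq_iff apf_step_def step_fn_eq')

lemma step_meas:
  assumes t: "t \<in> {1..T}"
  shows "apf_step M f g N t \<in> measurable SS (subprob_algebra SS)"
  unfolding step_eq
  by (rule measurable_distr2[OF _ SK_meas[OF t]]) (use step_alt_meas[OF t] in \<open>simp add: case_prod_beta'\<close>)

end



context apf_ctx
begin

lemma bk_meas: "t + k \<le> T \<Longrightarrow> apf_bk f g k t \<in> borel_measurable M"
proof (induction k arbitrary: t)
  case 0 then show ?case by simp
next
  case (Suc k)
  have t: "Suc t \<in> {1..T}" using Suc.prems by auto
  have [measurable]: "apf_bk f g k (Suc t) \<in> borel_measurable M" using Suc.prems by (intro Suc.IH) simp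
  note [measurable] = g_meas[OF t]
  have h: "(\<lambda>x'. ennreal (g (Suc t) x') * apf_bk f g k (Suc t) x') \<in> borel_measurable M" by measurable
  show ?case
    using measurable_compose[OF f_sub[OF t] nn_integral_measurable_subprob_algebra[OF h]] by simp
qed

definition Psi :: "nat \<Rightarrow> (nat \<Rightarrow> 'a) \<times> real \<Rightarrow> ennreal" where
  "Psi t s = (if t = T then ennreal (snd s) else ennreal (snd s) *
     (\<Sum>m<N. ennreal (apf_w g (Suc t) (fst s) m / W (Suc t) (fst s)) * apf_bk f g (T - t) t (fst s m)))"

lemma Psi_meas: assumes "t \<le> T" shows "Psi t \<in> borel_measurable SS"
proof (cases "t = T")
  case True
  then show ?thesis unfolding Psi_def apf_SS_def by simp
next
  case False
  then have t1: "Suc t \<in> {1..T}" using assms by simp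
  have *: "(\<lambda>s. \<Sum>m<N. ennreal (apf_w g (Suc t) (fst s) m / W (Suc t) (fst s)) * apf_bk f g (T - t) t (fst s m))
      \<in> borel_measurable SS"
  proof (intro borel_measurable_sum)
    fix m assume "m \<in> {..<N}"
    then have m: "m < N" by simp
    have bkT: "t + (T - t) \<le> T" using assms by simp
    note [measurable] = w_meas[OF t1 m] W_meas[OF t1]
      measurable_compose[OF meas_comp[OF m] bk_meas[OF bkT]]
    show "(\<lambda>s. ennreal (apf_w g (Suc t) (fst s) m / W (Suc t) (fst s)) * apf_bk f g (T - t) t (fst s m))
      \<in> borel_measurable SS" using assms by measurable
  qed
  have **: "(\<lambda>s. ennreal (snd s)) \<in> borel_measurable SS" unfolding apf_SS_def by simp
  note [measurable] = * **
  have "(\<lambda>s. ennreal (snd s) * (\<Sum>m<N. ennreal (apf_w g (Suc t) (fst s) m / W (Suc t) (fst s)) * apf_bk f g (T - t) t (fst s m)))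
    \<in> borel_measurable SS" by measurable
  then show ?thesis unfolding Psi_def using False by simp
qed

lemma step_pointwise:
  assumes t: "t < T"
  shows "Psi (Suc t) (step_alt (Suc t) (xs, Z) \<omega>) = ennreal Z *
    (\<Sum>m. if 0 < g (Suc t) (\<omega> !! m) \<and> cntS (\<lambda>j. 0 < g (Suc t) (\<omega> !! j)) m = N
        then (\<Sum>j<m. if 0 < g (Suc t) (\<omega> !! j) then ennreal (g (Suc t) (\<omega> !! j)) * apf_bk f g (T - Suc t) (Suc t) (\<omega> !! j) else 0)
          * ennreal (1 / real m) else 0)"
proof (cases "succ (Suc t) \<omega>")
  case False
  have st: "step_alt (Suc t) (xs, Z) \<omega> = (xs, 0)" using False by (simp add: step_alt_def)
  have "\<not> (0 < g (Suc t) (\<omega> !! m) \<and> cntS (\<lambda>j. 0 < g (Suc t) (\<omega> !! j)) m = N)" for m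
    using False unfolding succ_def by blast
  then have z: "(\<lambda>m. if 0 < g (Suc t) (\<omega> !! m) \<and> cntS (\<lambda>j. 0 < g (Suc t) (\<omega> !! j)) m = N
        then (\<Sum>j<m. if 0 < g (Suc t) (\<omega> !! j) then ennreal (g (Suc t) (\<omega> !! j)) * apf_bk f g (T - Suc t) (Suc t) (\<omega> !! j) else 0)
          * ennreal (1 / real m) else 0) = (\<lambda>m. 0)"
    by (intro ext if_not_P)
  show ?thesis unfolding st z by (simp add: Psi_def)
next
  case True
  define P where "P j = (0 < g (Suc t) (\<omega> !! j))" for j
  define b where "b x = apf_bk f g (T - Suc t) (Suc t) x" for x
  define e where "e n = eidx (Suc t) n \<omega>" for n
  define \<phi> where "\<phi> j = ennreal (g (Suc t) (\<omega> !! j)) * b (\<omega> !! j)" for j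
  define G where "G = (\<Sum>n<N. g (Suc t) (\<omega> !! e n))"
  have PP: "{j. P j} = {k. 0 < g (Suc t) (\<omega> !! k)}" unfolding P_def by simp
  have A: "infinite {j. P j} \<or> n < card {j. P j}" if "n \<le> N" for n
    using True succ_iff[of "Suc t" \<omega>] that unfolding PP by auto
  have en: "enumerate {j. P j} n = e n" if "n \<le> N" for n
    unfolding PP e_def using enum_eidx[OF True that] .
  have eP: "P (e n)" and ecnt: "cntS P (e n) = n" if "n \<le> N" for n
    using cntS_enum[OF A[OF that]] en[OF that] by auto
  have set_eq: "{j. j < e N \<and> P j} = e ` {..<N}"
  proof -
    have "{j. j < e N \<and> P j} = {j\<in>{j. P j}. j < enumerate {j. P j} N}" using en[of N] by auto
    also have "\<dots> = enumerate {j. P j} ` {..<N}" by (rule enum_props(2)[OF A[of N]]) simp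
    also have "\<dots> = e ` {..<N}" using en by (intro image_cong) auto
    finally show ?thesis .
  qed
  have inj: "inj_on e {..<N}"
  proof -
    have "inj_on (enumerate {j. P j}) {..<N}"
      using enum_props(3)[OF A[of N]] by (rule inj_on_subset) auto
    then show ?thesis using en by (simp add: inj_on_def)
  qed
  have eN_pos: "0 < e N"
  proof (rule ccontr)
    assume "\<not> 0 < e N"
    then have "e N = 0" by simp
    then show False using ecnt[of N] N1 by simp
  qed
  have gpos: "0 < g (Suc t) (\<omega> !! e n)" if "n < N" for n
    using eP[of n] that unfolding P_def by simp
  have "(0::nat) \<in> {..<N}" using N1 by simp
  then have "{..<N} \<noteq> {}" by blast
  then have G_pos: "0 < G" unfolding G_def using gpos by (intro sum_pos) auto
  have term_eq: "(if P m \<and> cntS P m = N then (\<Sum>j<m. if P j then \<phi> j else 0) * ennreal (1 / real m) else 0) =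
      (if m = e N then (\<Sum>j<e N. if P j then \<phi> j else 0) * ennreal (1 / real (e N)) else 0)" for m
  proof (cases "P m \<and> cntS P m = N")
    case True
    then have "m = e N" using cntS_uniq[of P m "e N" N] eP[of N] ecnt[of N] by auto
    then show ?thesis using True by simp
  next
    case False
    then have ne: "m \<noteq> e N" using eP[of N] ecnt[of N] by auto
    show ?thesis by (subst if_not_P[OF False], subst if_not_P[OF ne], rule refl)
  qed
  have sum_eq: "(\<Sum>j<e N. if P j then \<phi> j else 0) = (\<Sum>n<N. \<phi> (e n))"
  proof -
    have "(\<Sum>j<e N. if P j then \<phi> j else 0) = (\<Sum>j\<in>{j\<in>{..<e N}. P j}. \<phi> j)"
      by (rule sum.inter_filter[symmetric]) simp
    also have "{j\<in>{..<e N}. P j} = e ` {..<N}" using set_eq by auto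
    also have "(\<Sum>j\<in>e ` {..<N}. \<phi> j) = (\<Sum>n<N. \<phi> (e n))"
      using inj by (simp add: sum.reindex)
    finally show ?thesis .
  qed
  have RHS: "(\<Sum>m. if P m \<and> cntS P m = N then (\<Sum>j<m. if P j then \<phi> j else 0) * ennreal (1 / real m) else 0)
      = (\<Sum>n<N. ennreal (g (Suc t) (\<omega> !! e n) / real (e N)) * b (\<omega> !! e n))"
  proof -
    have "(\<lambda>m. if P m \<and> cntS P m = N then (\<Sum>j<m. if P j then \<phi> j else 0) * ennreal (1 / real m) else 0)
        sums ((\<Sum>j<e N. if P j then \<phi> j else 0) * ennreal (1 / real (e N)))"
      unfolding term_eq by (rule sums_single)
    then have "(\<Sum>m. if P m \<and> cntS P m = N then (\<Sum>j<m. if P j then \<phi> j else 0) * ennreal (1 / real m) else 0)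
        = (\<Sum>n<N. \<phi> (e n)) * ennreal (1 / real (e N))"
      unfolding sum_eq by (rule sums_unique[symmetric])
    also have "\<dots> = (\<Sum>n<N. ennreal (g (Suc t) (\<omega> !! e n) / real (e N)) * b (\<omega> !! e n))"
      unfolding sum_distrib_right
    proof (intro sum.cong refl)
      fix n assume "n \<in> {..<N}"
      then have gn: "0 \<le> g (Suc t) (\<omega> !! e n)" using gpos[of n] by simp
      have "ennreal (g (Suc t) (\<omega> !! e n)) * ennreal (1 / real (e N)) = ennreal (g (Suc t) (\<omega> !! e n) / real (e N))"
        using gn by (simp add: ennreal_mult[symmetric])
      then show "\<phi> (e n) * ennreal (1 / real (e N)) = ennreal (g (Suc t) (\<omega> !! e n) / real (e N)) * b (\<omega> !! e n)"
        unfolding \<phi>_def by (simp add: ac_simps)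
    qed
    finally show ?thesis .
  qed
  define xs' where "xs' = restrict (\<lambda>n. \<omega> !! e n) {..<N}"
  have step: "step_alt (Suc t) (xs, Z) \<omega> = (xs', Z * (G / real (e N)))"
    using True unfolding step_alt_def xs'_def G_def e_def by simp
  have xs'_m: "xs' m = \<omega> !! e m" if "m < N" for m
    using that unfolding xs'_def by simp
  have GN: "G / real (e N) = (\<Sum>n<N. g (Suc t) (\<omega> !! e n) / real (e N))"
    unfolding G_def by (simp add: sum_divide_distrib)
  have ennG: "ennreal (G / real (e N)) = (\<Sum>n<N. ennreal (g (Suc t) (\<omega> !! e n) / real (e N)))"
  proof -
    have nn: "0 \<le> g (Suc t) (\<omega> !! e n) / real (e N)" if "n \<in> {..<N}" for n
      using gpos[of n] that by (intro divide_nonneg_nonneg) auto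
    show ?thesis unfolding GN by (rule sum_ennreal[symmetric]) (rule nn)
  qed
  have LHS: "Psi (Suc t) (xs', Z * (G / real (e N))) =
      ennreal Z * (\<Sum>n<N. ennreal (g (Suc t) (\<omega> !! e n) / real (e N)) * b (\<omega> !! e n))"
  proof (cases "0 \<le> Z")
    case False
    then have "Z * (G / real (e N)) \<le> 0" using G_pos eN_pos
      by (intro mult_nonpos_nonneg) auto
    then show ?thesis using False unfolding Psi_def by (simp add: ennreal_neg)
  next
    case Z: True
    have eZ: "ennreal (Z * (G / real (e N))) = ennreal Z * ennreal (G / real (e N))"
      using Z G_pos eN_pos by (intro ennreal_mult) auto
    show ?thesis
    proof (cases "Suc t = T")
      case True
      have b1: "b x = 1" for x unfolding b_def using True by simp
      have "Psi (Suc t) (xs', Z * (G / real (e N))) = ennreal (Z * (G / real (e N)))"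
        using True unfolding Psi_def by simp
      also have "\<dots> = ennreal Z * ennreal (G / real (e N))" by (rule eZ)
      also have "\<dots> = ennreal Z * (\<Sum>n<N. ennreal (g (Suc t) (\<omega> !! e n) / real (e N)) * b (\<omega> !! e n))"
        unfolding ennG b1 by simp
      finally show ?thesis .
    next
      case False
      have w: "apf_w g (Suc (Suc t)) xs' m = g (Suc t) (\<omega> !! e m)" if "m < N" for m
        using that by (simp add: apf_w_def xs'_m)
      have W': "W (Suc (Suc t)) xs' = G"
        unfolding W_def G_def using w by (intro sum.cong) auto
      have "Psi (Suc t) (xs', Z * (G / real (e N))) = ennreal (Z * (G / real (e N))) *
          (\<Sum>m<N. ennreal (apf_w g (Suc (Suc t)) xs' m / W (Suc (Suc t)) xs') * apf_bk f g (T - Suc t) (Suc t) (xs' m))"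
        using False unfolding Psi_def by simp
      also have "\<dots> = ennreal Z * ennreal (G / real (e N)) *
          (\<Sum>m<N. ennreal (g (Suc t) (\<omega> !! e m) / G) * b (\<omega> !! e m))"
        unfolding eZ W' b_def
        by (intro arg_cong[where f="\<lambda>x. ennreal Z * ennreal (G / real (e N)) * x"] sum.cong refl)
          (simp add: w xs'_m)
      also have "\<dots> = ennreal Z * (\<Sum>m<N. ennreal (G / real (e N)) * ennreal (g (Suc t) (\<omega> !! e m) / G) * b (\<omega> !! e m))"
        by (simp add: sum_distrib_left mult.assoc)
      also have "\<dots> = ennreal Z * (\<Sum>n<N. ennreal (g (Suc t) (\<omega> !! e n) / real (e N)) * b (\<omega> !! e n))"
      proof (intro arg_cong[where f="\<lambda>x. ennreal Z * x"] sum.cong refl)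
        fix m assume "m \<in> {..<N}"
        then have gm: "0 < g (Suc t) (\<omega> !! e m)" using gpos by simp
        have "ennreal (G / real (e N)) * ennreal (g (Suc t) (\<omega> !! e m) / G) =
            ennreal (G / real (e N) * (g (Suc t) (\<omega> !! e m) / G))"
          using G_pos eN_pos gm by (intro ennreal_mult[symmetric]) auto
        also have "G / real (e N) * (g (Suc t) (\<omega> !! e m) / G) = g (Suc t) (\<omega> !! e m) / real (e N)"
          using G_pos by (simp add: field_simps)
        finally show "ennreal (G / real (e N)) * ennreal (g (Suc t) (\<omega> !! e m) / G) * b (\<omega> !! e m) =
            ennreal (g (Suc t) (\<omega> !! e m) / real (e N)) * b (\<omega> !! e m)" by simp
      qed
      finally show ?thesis .
    qed
  qed
  show ?thesis
    unfolding step LHS using RHS unfolding P_def \<phi>_def b_def by simp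
qed

end



context apf_ctx
begin

lemma space_PS_ne: "space PS \<noteq> {}"
  using space_M_ne by (simp add: space_PiM_empty_iff)

lemma space_SS_ne: "space SS \<noteq> {}"
  using space_PS_ne unfolding apf_SS_def by (simp add: space_pair_measure)

lemma step_Psi:
  assumes t: "t < T" and s: "s \<in> space SS"
  shows "(\<integral>\<^sup>+x. Psi (Suc t) x \<partial>apf_step M f g N (Suc t) s) = Psi t s"
proof -
  define xs where "xs = fst s"
  define Z where "Z = snd s"
  have s_eq: "s = (xs, Z)" by (simp add: xs_def Z_def)
  have t1: "Suc t \<in> {1..T}" using t by simp
  have xs: "xs \<in> space PS" using space_SS_fst[OF s] by (simp add: xs_def)
  let ?Q = "apf_Q M f g N (Suc t) xs"
  have mstep0: "(\<lambda>\<omega>. step_alt (Suc t) s \<omega>) \<in> measurable (stream_space M) SS"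
    using measurable_compose[OF measurable_Pair1'[OF s] step_alt_meas[OF t1]] by simp
  have mstep: "(\<lambda>\<omega>. step_alt (Suc t) s \<omega>) \<in> measurable (stream_space ?Q) SS"
    using mstep0 by (subst measurable_cong_sets[OF sets_stream_space_cong[OF sets_Q] refl])
  have PsiM: "Psi (Suc t) \<in> borel_measurable SS" using t by (intro Psi_meas) simp
  have "(\<integral>\<^sup>+x. Psi (Suc t) x \<partial>apf_step M f g N (Suc t) s) =
      (\<integral>\<^sup>+\<omega>. Psi (Suc t) (step_alt (Suc t) s \<omega>) \<partial>stream_space ?Q)"
    unfolding step_eq xs_def by (rule nn_integral_distr[OF mstep[unfolded xs_def]]) (simp add: PsiM)
  also have "\<dots> = Psi t s"
  proof (cases "0 < W (Suc t) xs")
    case False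
    have W0: "W (Suc t) xs = 0" using False W_nonneg[OF t1 xs] by simp
    have null: "emeasure (stream_space ?Q) A = 0" for A
      by (rule stream_space_null[OF Q_null[OF t1 xs False]])
    have "AE \<omega> in stream_space ?Q. False"
      by (rule AE_I'[of "space (stream_space ?Q)"]) (auto simp: null_sets_def null)
    then have "(\<integral>\<^sup>+\<omega>. Psi (Suc t) (step_alt (Suc t) s \<omega>) \<partial>stream_space ?Q) = (\<integral>\<^sup>+\<omega>. 0 \<partial>stream_space ?Q)"
      by (intro nn_integral_cong_AE) (auto elim: eventually_mono)
    also have "\<dots> = Psi t s"
      using t unfolding Psi_def by (simp add: W0 xs_def[symmetric])
    finally show ?thesis .
  next
    case True
    interpret Q: prob_space ?Q by (rule Q_prob[OF t1 xs True])
    let ?P = "\<lambda>x. 0 < g (Suc t) x"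
    let ?\<phi> = "\<lambda>x. ennreal (g (Suc t) x) * apf_bk f g (T - Suc t) (Suc t) x"
    note gm[measurable] = g_meas[OF t1]
    have bkT': "Suc t + (T - Suc t) \<le> T" using t by simp
    note bm[measurable] = bk_meas[OF bkT']
    have Pm: "Measurable.pred M ?P" by measurable
    have phim: "?\<phi> \<in> borel_measurable M" using t by measurable
    have PmQ[measurable]: "Measurable.pred ?Q ?P"
      using Pm by (subst measurable_cong_sets[OF sets_Q refl])
    have phimQ[measurable]: "?\<phi> \<in> borel_measurable ?Q"
      using phim by (subst measurable_cong_sets[OF sets_Q refl])
    define F where "F \<omega> = (\<Sum>m. if ?P (\<omega> !! m) \<and> cntS (\<lambda>j. ?P (\<omega> !! j)) m = N
        then (\<Sum>j<m. if ?P (\<omega> !! j) then ?\<phi> (\<omega> !! j) else 0) * ennreal (1 / real m) else 0)" for \<omega>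
    have Fm: "F \<in> borel_measurable (stream_space ?Q)"
      unfolding F_def by measurable
    have "(\<integral>\<^sup>+\<omega>. Psi (Suc t) (step_alt (Suc t) s \<omega>) \<partial>stream_space ?Q) =
        (\<integral>\<^sup>+\<omega>. ennreal Z * F \<omega> \<partial>stream_space ?Q)"
      unfolding s_eq F_def by (intro nn_integral_cong step_pointwise[OF t])
    also have "\<dots> = ennreal Z * (\<integral>\<^sup>+\<omega>. F \<omega> \<partial>stream_space ?Q)"
      by (rule nn_integral_cmult[OF Fm])
    also have "(\<integral>\<^sup>+\<omega>. F \<omega> \<partial>stream_space ?Q) = (\<integral>\<^sup>+x. (if ?P x then ?\<phi> x else 0) \<partial>?Q)"
      unfolding F_def by (rule Q.stream_key[OF PmQ phimQ N1])
    also have "\<dots> = (\<integral>\<^sup>+x. ?\<phi> x \<partial>?Q)"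
    proof (rule nn_integral_cong)
      fix x assume "x \<in> space ?Q"
      then have "0 \<le> g (Suc t) x" using g_nonneg[OF t1] by simp
      then show "(if ?P x then ?\<phi> x else 0) = ?\<phi> x" by auto
    qed
    also have "\<dots> = (\<Sum>m<N. ennreal (apf_w g (Suc t) xs m / W (Suc t) xs) * (\<integral>\<^sup>+x. ?\<phi> x \<partial>f (Suc t) (xs m)))"
      by (rule Q_nn_integral[OF t1 xs phim])
    also have "\<dots> = (\<Sum>m<N. ennreal (apf_w g (Suc t) xs m / W (Suc t) xs) * apf_bk f g (T - t) t (xs m))"
    proof -
      have Tt: "T - t = Suc (T - Suc t)" using t by simp
      show ?thesis by (simp only: Tt apf_bk.simps)
    qed
    finally show ?thesis
      using t unfolding Psi_def by (simp add: xs_def Z_def)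
  qed
  finally show ?thesis .
qed

lemma sets_run: "t \<le> T \<Longrightarrow> sets (apf_run M p0 f g N t) = sets SS"
proof (induction t)
  case 0
  then show ?case by simp
next
  case (Suc t)
  then have IH: "sets (apf_run M p0 f g N t) = sets SS" by simp
  have ne: "space (apf_run M p0 f g N t) \<noteq> {}"
    using sets_eq_imp_space_eq[OF IH] space_SS_ne by simp
  show ?case
    by (simp only: apf_run.simps) (rule sets_bind[OF _ ne], simp add: step_eq)
qed

lemma main: "t \<le> T \<Longrightarrow> (\<integral>\<^sup>+s. Psi t s \<partial>apf_run M p0 f g N t) = apf_marginal p0 f g T"
proof (induction t)
  case 0
  have PSeq: "sets (\<Pi>\<^sub>M i\<in>{..<N}. p0) = sets PS"
    by (rule sets_PiM_cong) (auto simp: sets_p0)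
  have m0: "(\<lambda>xs. (xs, 1::real)) \<in> measurable (\<Pi>\<^sub>M i\<in>{..<N}. p0) SS"
    unfolding measurable_cong_sets[OF PSeq refl] apf_SS_def by measurable
  have PP: "prob_space (\<Pi>\<^sub>M i\<in>{..<N}. p0)"
    using p0 by (intro prob_space_PiM) auto
  have "(\<integral>\<^sup>+s. Psi 0 s \<partial>apf_run M p0 f g N 0) = (\<integral>\<^sup>+xs. Psi 0 (xs, 1) \<partial>(\<Pi>\<^sub>M i\<in>{..<N}. p0))"
    by (simp only: apf_run.simps) (rule nn_integral_distr[OF m0], simp add: Psi_meas)
  also have "\<dots> = apf_marginal p0 f g T"
  proof (cases "T = 0")
    case True
    have P1: "Psi 0 (xs, 1) = 1" for xs unfolding Psi_def using True by simp
    have bk1: "apf_bk f g T 0 x = 1" for x using True by simp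
    have "apf_marginal p0 f g T = (\<integral>\<^sup>+x. 1 \<partial>p0)" unfolding apf_marginal_def
      by (rule nn_integral_cong) (simp add: bk1)
    also have "\<dots> = 1" using prob_space.emeasure_space_1[OF p0] by simp
    finally have m1: "apf_marginal p0 f g T = 1" .
    show ?thesis unfolding P1 m1
      using prob_space.emeasure_space_1[OF PP] by simp
  next
    case False
    have w1: "apf_w g 1 xs m = 1" for xs m by (simp add: apf_w_def)
    have w1': "apf_w g 1 xs = (\<lambda>_. 1)" for xs by (simp add: fun_eq_iff apf_w_def)
    have W1: "W 1 xs = real N" for xs unfolding W_def w1' by simp
    have bkm: "apf_bk f g T 0 \<in> borel_measurable p0"
      using bk_meas[of 0 T] by (simp add: measurable_cong_sets[OF sets_p0 refl])
    have compm: "(\<lambda>xs. xs m) \<in> measurable (\<Pi>\<^sub>M i\<in>{..<N}. p0) p0" if "m < N" for m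
      by (rule measurable_component_singleton) (use that in simp)
    have bkc: "(\<lambda>xs. apf_bk f g T 0 (xs m)) \<in> borel_measurable (\<Pi>\<^sub>M i\<in>{..<N}. p0)" if "m < N" for m
      by (rule measurable_compose[OF compm[OF that] bkm])
    have comp: "(\<integral>\<^sup>+xs. apf_bk f g T 0 (xs m) \<partial>(\<Pi>\<^sub>M i\<in>{..<N}. p0)) = apf_marginal p0 f g T"
      if m: "m < N" for m
    proof -
      have "(\<integral>\<^sup>+xs. apf_bk f g T 0 (xs m) \<partial>(\<Pi>\<^sub>M i\<in>{..<N}. p0)) =
          (\<integral>\<^sup>+x. apf_bk f g T 0 x \<partial>distr (\<Pi>\<^sub>M i\<in>{..<N}. p0) p0 (\<lambda>\<omega>. \<omega> m))"
        by (rule nn_integral_distr[symmetric, OF compm[OF m]]) (simp add: bkm)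
      also have "distr (\<Pi>\<^sub>M i\<in>{..<N}. p0) p0 (\<lambda>\<omega>. \<omega> m) = p0"
        by (rule distr_PiM_component) (use m p0 in simp_all)
      finally show ?thesis by (simp add: apf_marginal_def)
    qed
    have "(\<integral>\<^sup>+xs. Psi 0 (xs, 1) \<partial>(\<Pi>\<^sub>M i\<in>{..<N}. p0)) =
        (\<integral>\<^sup>+xs. (\<Sum>m<N. ennreal (1 / real N) * apf_bk f g T 0 (xs m)) \<partial>(\<Pi>\<^sub>M i\<in>{..<N}. p0))"
    proof -
      have a: "apf_w g (Suc 0) xs m = 1" for xs m by (simp add: apf_w_def)
      have b: "W (Suc 0) xs = real N" for xs using W1 by simp
      show ?thesis unfolding Psi_def using False by (simp add: a b)
    qed
    also have "\<dots> = (\<Sum>m<N. ennreal (1 / real N) * (\<integral>\<^sup>+xs. apf_bk f g T 0 (xs m) \<partial>(\<Pi>\<^sub>M i\<in>{..<N}. p0)))"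
    proof (subst nn_integral_sum)
      fix m assume "m \<in> {..<N}"
      then have m: "m < N" by simp
      note [measurable] = bkc[OF m]
      show "(\<lambda>xs. ennreal (1 / real N) * apf_bk f g T 0 (xs m)) \<in> borel_measurable (\<Pi>\<^sub>M i\<in>{..<N}. p0)"
        by measurable
    next
      show "(\<Sum>m<N. \<integral>\<^sup>+xs. ennreal (1 / real N) * apf_bk f g T 0 (xs m) \<partial>(\<Pi>\<^sub>M i\<in>{..<N}. p0)) =
          (\<Sum>m<N. ennreal (1 / real N) * (\<integral>\<^sup>+xs. apf_bk f g T 0 (xs m) \<partial>(\<Pi>\<^sub>M i\<in>{..<N}. p0)))"
        by (intro sum.cong refl nn_integral_cmult bkc) simp
    qed
    also have "\<dots> = (\<Sum>m<N. ennreal (1 / real N) * apf_marginal p0 f g T)"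
      using comp by simp
    also have "\<dots> = of_nat N * ennreal (1 / real N) * apf_marginal p0 f g T"
      by (simp add: mult.assoc)
    also have "of_nat N * ennreal (1 / real N) = 1"
      using N1 by (simp add: ennreal_of_nat_eq_real_of_nat ennreal_mult[symmetric] del: ennreal_1)
    finally show ?thesis by simp
  qed
  finally show ?case .
next
  case (Suc t)
  then have t: "t < T" by simp
  have t1: "Suc t \<in> {1..T}" using t by simp
  have sr: "sets (apf_run M p0 f g N t) = sets SS" using t by (intro sets_run) simp
  have km: "apf_step M f g N (Suc t) \<in> measurable (apf_run M p0 f g N t) (subprob_algebra SS)"
    using step_meas[OF t1] by (subst measurable_cong_sets[OF sr refl])
  have "(\<integral>\<^sup>+s. Psi (Suc t) s \<partial>apf_run M p0 f g N (Suc t)) =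
      (\<integral>\<^sup>+s. \<integral>\<^sup>+x. Psi (Suc t) x \<partial>apf_step M f g N (Suc t) s \<partial>apf_run M p0 f g N t)"
    by (simp only: apf_run.simps) (rule nn_integral_bind[OF Psi_meas km], use Suc.prems in simp)
  also have "\<dots> = (\<integral>\<^sup>+s. Psi t s \<partial>apf_run M p0 f g N t)"
  proof (rule nn_integral_cong)
    fix s assume "s \<in> space (apf_run M p0 f g N t)"
    then have "s \<in> space SS" using sets_eq_imp_space_eq[OF sr] by simp
    then show "(\<integral>\<^sup>+x. Psi (Suc t) x \<partial>apf_step M f g N (Suc t) s) = Psi t s"
      by (rule step_Psi[OF t])
  qed
  also have "\<dots> = apf_marginal p0 f g T"
    using Suc by simp
  finally show ?case .
qed

end

theorem theorem1:
  fixes M :: "'a measure" and p0 :: "'a measure"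
    and f :: "nat \<Rightarrow> 'a \<Rightarrow> 'a measure" and g :: "nat \<Rightarrow> 'a \<Rightarrow> real"
    and N T :: nat
  assumes "N \<ge> 1"
    and "prob_space p0" and "sets p0 = sets M"
    and "\<forall>t\<in>{1..T}. f t \<in> M \<rightarrow>\<^sub>M prob_algebra M"
    and "\<forall>t\<in>{1..T}. g t \<in> borel_measurable M"
    and "\<forall>t\<in>{1..T}. \<forall>x\<in>space M. 0 \<le> g t x"
  shows "(\<integral>\<^sup>+ s. ennreal (snd s) \<partial>apf_run M p0 f g N T) = apf_marginal p0 f g T"
proof -
  have l: "apf_ctx M p0 f g N T"
  proof (rule apf_ctx.intro)
    show "1 \<le> N" by (rule assms(1))
    show "prob_space p0" by (rule assms(2))
    show "sets p0 = sets M" by (rule assms(3))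
    show "f t \<in> M \<rightarrow>\<^sub>M prob_algebra M" if "t \<in> {1..T}" for t
      using assms(4) that by blast
    show "g t \<in> borel_measurable M" if "t \<in> {1..T}" for t
      using assms(5) that by blast
    show "0 \<le> g t x" if "t \<in> {1..T}" "x \<in> space M" for t x
      using assms(6) that by blast
  qed
  interpret apf_ctx M p0 f g N T by (rule l)
  have "(\<integral>\<^sup>+s. Psi T s \<partial>apf_run M p0 f g N T) = apf_marginal p0 f g T"
    by (rule main) simp
  moreover have "Psi T s = ennreal (snd s)" for s unfolding Psi_def by simp
  ultimately show ?thesis by simp
qed



end
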